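(* Suppose that Assumptions 1--5 and Assumption 8 hold. Furthermore, suppose that $V_{1}(x_{1}^{aug})=x_{1}^{aug,T}Qx_{1}^{aug}$ and $V_{2}(\tilde{x})=\tilde{x}^{T}P\tilde{x}$, along with scalars $\alpha_{1}>0$, $\alpha_{2}>0$, $\bar{\gamma}_{1}>0$, $\bar{\gamma}_{21}>0$, $\bar{\gamma}_{22}\geq 0$ such that, under $v_{des}(k)=-K_{1}x_{1}^{aug}(k)$ and $u(k)=K_{21}v_{des}(k)-K_{22}x_{2}(k)$, \begin{eqnarray*} V_{1}(x_{1}^{aug}(k+1))-V_{1}(x_{1}^{aug}(k)) &<& -\alpha_{1} V_{1}(x_{1}^{aug}(k)) + \bar{\gamma}_{1} \|\tilde{v}(k)\|^{2},\\ V_{2}(\tilde{x}(k+1))-V_{2}(\tilde{x}(k)) &<& -\alpha_{2}V_{2}(\tilde{x}(k)) + \bar{\gamma}_{21} \|v_{des}(k)\|^{2} + \bar{\gamma}_{22} \|x_{f}(k)\|^{2}, \end{eqnarray*} together with the matrices $C$ and $K_{1}$, satisfy \begin{equation*} \alpha_{1}\alpha_{2}\bar{\lambda}_{min}(P)\bar{\lambda}_{min}(Q) \geq \bar{\gamma}_{1}\|C\|^{2}(\bar{\gamma}_{21}\|K_{1}\|^{2}+\bar{\gamma}_{22}), \end{equation*} where $\bar{\lambda}_{min}(P)$ and $\bar{\lambda}_{min}(Q)$ are the minimum eigenvalues of $P$ and $Q$. Then there exist sets $G_{1} \subset \mathbb{R}^{n_{1}+n_{2}}$ and $G_{2} \subset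 \mathbb{R}^{n_{2}}$, along with scalars $0 \leq \lambda_{1} < 1$ and $0 \leq \lambda_{2} < 1$, such that if $x_{1}^{aug}(k) \in G_{1}$, $\tilde{x}(k) \in G_{2}$, $v_{des}(k) = -K_{1}x_{1}(k)$, and $u(k) = K_{21}v_{des}(k) - K_{22}x_{2}(k)$, then $u(k) \in U$, $x_{1}^{aug}(k+1) \in \lambda_{1}G_{1}$, and $\tilde{x}(k+1) \in \lambda_{2}G_{2}$.
   Context: Setting: cascade $x_{1}(k+1)=A_{1}x_{1}(k)+B_{1}v(k)$, $x_{2}(k+1)=A_{2}x_{2}(k)+B_{2}u(k)$, $v=Cx_{2}$, $u(k)\in U$; reference model $x_{f}(k+1)=A_{f}x_{f}(k)+B_{f}v_{des}(k)$; error $\tilde{x}=x_{2}-x_{f}$, $\tilde{v}=C\tilde{x}$, $\tilde{x}(k+1)=A_{2}\tilde{x}(k)+(A_{2}-A_{f})x_{f}(k)+B_{2}u(k)-B_{f}v_{des}(k)$; augmented outer state $x_{1}^{aug}=[x_{1}^{T}\ x_{f}^{T}]^{T}$ with $x_{1}^{aug}(k+1)=A_{1}^{aug}x_{1}^{aug}(k)+B_{1}^{aug}\tilde{v}(k)+B_{f}^{aug}v_{des}(k)$, $A_{1}^{aug}=\begin{bmatrix}A_{1}&B_{1}C\\0&A_{f}\end{bmatrix}$, $B_{1}^{aug}=[B_{1}^{T}\ 0]^{T}$, $B_{f}^{aug}=[0\ B_{f}^{T}]^{T}$. Assumptions: (1) $(A_{1},B_{1})$ stabilizable; (2) $(A_{2},B_{2})$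 controllable; (3) actuator dynamics in block controllable canonical form; (4) $A_{f}$ Schur stable; (5) reference model shares no zeros with unstable poles of $A_{1}$; (8) $u=0$ is in the interior of $U$. The gains are chosen so that $A_{1}^{aug}-B_{1}^{aug}K_{1}$ and $A_{2}-B_{2}K_{22}$ are Schur; $Q,P$ are symmetric positive definite. For a set $G$, $\lambda G=\{\lambda x:x\in G\}$. (The paper writes $v_{des}(k)=-K_{1}x_{1}(k)$, presumably meaning $-K_{1}x_{1}^{aug}(k)$.) *)

theory Defs
  imports "HOL-Analysis.Analysis"
begin

text \<open>Complexification of real matrices (eigenvalues are taken over the complex numbers).\<close>
definition cmat :: "real^'n^'m \<Rightarrow> complex^'n^'m" where
  "cmat A = (\<chi> i j. complex_of_real (A$i$j))"

definition is_eigenvalue :: "real^'n^'n \<Rightarrow> complex \<Rightarrow> bool" where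
  "is_eigenvalue A z \<longleftrightarrow> (\<exists>w::complex^'n. w \<noteq> 0 \<and> cmat A *v w = z *s w)"

definition schur_stable :: "real^'n^'n \<Rightarrow> bool" where
  "schur_stable A \<longleftrightarrow> (\<forall>z. is_eigenvalue A z \<longrightarrow> cmod z < 1)"

definition stabilizable :: "real^'n^'n \<Rightarrow> real^'p^'n \<Rightarrow> bool" where
  "stabilizable A B \<longleftrightarrow> (\<exists>K::real^'n^'p. schur_stable (A - B ** K))"

definition controllable :: "real^'n^'n \<Rightarrow> real^'p^'n \<Rightarrow> bool" where
  "controllable A B \<longleftrightarrow>
     span (\<Union>k<CARD('n). range (\<lambda>u. ((\<lambda>x. A *v x) ^^ k) (B *v u))) = UNIV"

text \<open>The state is split (via the bijection
  idx) into r blocks of size p (block index, position in block); block i (i < r-1) has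
  x_i(k+1) = x_(i+1)(k); the last block row of A is arbitrary; B = [0; ...; 0; I].\<close>
definition block_ccf :: "real^'n^'n \<Rightarrow> real^'p^'n \<Rightarrow> bool" where
  "block_ccf A B \<longleftrightarrow> (\<exists>(r::nat) (idx::'n \<Rightarrow> nat \<times> 'p).
      bij_betw idx UNIV ({..<r} \<times> UNIV) \<and>
      (\<forall>i j. fst (idx i) + 1 < r \<longrightarrow>
           A$i$j = (if idx j = (fst (idx i) + 1, snd (idx i)) then 1 else 0)) \<and>
      (\<forall>i q. B$i$q = (if idx i = (r - 1, q) then 1 else 0)))"

text \<open>Invariant (transmission) zeros of the square system (Af, Bf, C): z such that the
  Rosenbrock matrix [zI - Af, -Bf; C, 0] is singular.\<close>
definition invariant_zero :: "real^'n^'n \<Rightarrow> real^'m^'n \<Rightarrow> real^'n^'m \<Rightarrow> complex \<Rightarrow> bool" where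
  "invariant_zero Af Bf C z \<longleftrightarrow> (\<exists>(w::complex^'n) (q::complex^'m).
      (w \<noteq> 0 \<or> q \<noteq> 0) \<and> z *s w - cmat Af *v w - cmat Bf *v q = 0 \<and> cmat C *v w = 0)"

definition unstable_pole :: "real^'n^'n \<Rightarrow> complex \<Rightarrow> bool" where
  "unstable_pole A z \<longleftrightarrow> is_eigenvalue A z \<and> 1 \<le> cmod z"

definition sym_posdef :: "real^'n^'n \<Rightarrow> bool" where
  "sym_posdef P \<longleftrightarrow> transpose P = P \<and> (\<forall>x. x \<noteq> 0 \<longrightarrow> 0 < x \<bullet> (P *v x))"

definition lambda_min :: "real^'n^'n \<Rightarrow> real" where
  "lambda_min P = Min {c. \<exists>x. x \<noteq> 0 \<and> P *v x = c *\<^sub>R x}"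

definition mat_norm :: "real^'n^'m \<Rightarrow> real" where
  "mat_norm M = onorm (\<lambda>x. M *v x)"

definition vappend :: "real^'a \<Rightarrow> real^'b \<Rightarrow> real^('a + 'b)" where
  "vappend x y = (\<chi> i. case i of Inl a \<Rightarrow> x$a | Inr b \<Rightarrow> y$b)"

definition A1aug :: "real^'n1^'n1 \<Rightarrow> real^'m^'n1 \<Rightarrow> real^'n2^'m \<Rightarrow> real^'n2^'n2
                     \<Rightarrow> real^('n1 + 'n2)^('n1 + 'n2)" where
  "A1aug A1 B1 C Af = (\<chi> i j. case (i, j) of
       (Inl a, Inl b) \<Rightarrow> A1$a$b
     | (Inl a, Inr b) \<Rightarrow> (B1 ** C)$a$b
     | (Inr a, Inl b) \<Rightarrow> 0
     | (Inr a, Inr b) \<Rightarrow> Af$a$b)"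

definition B1aug :: "real^'m^'n1 \<Rightarrow> real^'m^('n1 + 'n2::finite)" where
  "B1aug B1 = (\<chi> i j. case i of Inl a \<Rightarrow> B1$a$j | Inr b \<Rightarrow> 0)"

definition Bfaug :: "real^'m^'n2 \<Rightarrow> real^'m^('n1::finite + 'n2)" where
  "Bfaug Bf = (\<chi> i j. case i of Inl a \<Rightarrow> 0 | Inr b \<Rightarrow> Bf$b$j)"

end

theory Submission
  imports Defs
begin


lemma sym_inner: assumes "transpose P = P"
  shows "x \<bullet> (P *v y) = (P *v x) \<bullet> (y::real^'n)"
  by (metis assms dot_lmul_matrix transpose_matrix_vector)

lemma quad_cont[continuous_intros]: "continuous_on S (\<lambda>x::real^'n. x \<bullet> (P *v x))"
  by (intro continuous_intros linear_continuous_on bounded_linear.linear matrix_vector_mul_bounded_linear)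

lemma quad_expand: fixes P :: "real^'n^'n" assumes "transpose P = P"
  shows "(x + t *\<^sub>R y) \<bullet> (P *v (x + t *\<^sub>R y)) = x \<bullet> (P *v x) + 2 * t * (y \<bullet> (P *v x)) + t^2 * (y \<bullet> (P *v y))"
proof -
  have "x \<bullet> (P *v y) = y \<bullet> (P *v x)" using sym_inner[OF assms] by (simp add: inner_commute)
  then show ?thesis
    by (simp add: matrix_vector_right_distrib matrix_vector_mult_scaleR inner_add_left inner_add_right
        algebra_simps power2_eq_square)
qed

lemma lin_nonneg_zero:
  fixes d e :: real
  assumes "\<And>t. 0 \<le> 2 * t * d + t^2 * e" shows "d = 0"
proof (rule ccontr)
  assume "d \<noteq> 0"
  define t where "t = - d / (\<bar>e\<bar> + 1)"
  have p: "\<bar>e\<bar> + 1 > 0" by simp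
  have "0 \<le> 2 * t * d + t^2 * e" by (rule assms)
  hence "0 \<le> (2 * t * d + t^2 * e) * (\<bar>e\<bar>+1)^2" by simp
  also have "\<dots> = 2 * d * (t * (\<bar>e\<bar>+1)) * (\<bar>e\<bar>+1) + e * (t * (\<bar>e\<bar>+1))^2"
    by (simp add: algebra_simps power2_eq_square)
  also have "t * (\<bar>e\<bar>+1) = - d" unfolding t_def using p by simp
  also have "2 * d * (- d) * (\<bar>e\<bar>+1) + e * (- d)^2 = d^2 * (e - 2*(\<bar>e\<bar>+1))"
    by (simp add: algebra_simps power2_eq_square)
  finally have "0 \<le> d^2 * (e - 2*(\<bar>e\<bar>+1))" .
  moreover have "d^2 > 0" using \<open>d \<noteq> 0\<close> by simp
  moreover have "e - 2*(\<bar>e\<bar>+1) < 0" by (simp add: abs_if)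
  ultimately show False using mult_pos_neg[of "d^2" "e - 2*(\<bar>e\<bar>+1)"] by linarith
qed

lemma lambda_min_props:
  fixes P :: "real^'n^'n"
  assumes "sym_posdef P"
  shows "lambda_min P > 0 \<and> (\<forall>x. lambda_min P * (norm x)^2 \<le> x \<bullet> (P *v x))"
proof -
  have sym: "transpose P = P" and pd: "\<And>x. x \<noteq> 0 \<Longrightarrow> 0 < x \<bullet> (P *v x)"
    using assms unfolding sym_posdef_def by auto
  define f where "f = (\<lambda>x::real^'n. x \<bullet> (P *v x))"
  have ne: "sphere (0::real^'n) 1 \<noteq> {}"
    by (metis norm_axis_1 mem_sphere_0 empty_iff)
  have "continuous_on (sphere 0 1) f" unfolding f_def by (intro continuous_intros)
  from compact_attains_inf[OF compact_continuous_image[OF this compact_sphere]] ne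
  obtain x0 where x0: "norm x0 = 1" and mn: "\<And>y. norm y = 1 \<Longrightarrow> f x0 \<le> f y"
    by auto
  define \<mu> where "\<mu> = f x0"
  have x0nz: "x0 \<noteq> 0" using x0 by auto
  have mupos: "\<mu> > 0" unfolding \<mu>_def f_def using pd[OF x0nz] .
  have lb: "\<mu> * (norm x)^2 \<le> f x" for x
  proof (cases "x = 0")
    case True then show ?thesis by (simp add: f_def)
  next
    case False
    define y where "y = (1/norm x) *\<^sub>R x"
    have "norm y = 1" using False by (simp add: y_def)
    hence "\<mu> \<le> f y" using mn \<mu>_def by simp
    also have "f y = f x / (norm x)^2" unfolding y_def f_def
      by (simp add: matrix_vector_mult_scaleR power2_eq_square)
    finally show ?thesis using False by (simp add: field_simps)
  qed
  have eig: "P *v x0 = \<mu> *\<^sub>R x0"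
  proof -
    define w where "w = P *v x0 - \<mu> *\<^sub>R x0"
    have "\<And>t. 0 \<le> 2 * t * (w \<bullet> w) + t^2 * (f w - \<mu> * (w \<bullet> w))"
    proof -
      fix t :: real
      have "\<mu> * (norm (x0 + t *\<^sub>R w))^2 \<le> f (x0 + t *\<^sub>R w)" by (rule lb)
      moreover have "f (x0 + t *\<^sub>R w) = \<mu> + 2 * t * (w \<bullet> (P *v x0)) + t^2 * f w"
        unfolding f_def using quad_expand[OF sym, of x0 t w] by (simp add: \<mu>_def f_def)
      moreover have "(norm (x0 + t *\<^sub>R w))^2 = 1 + 2 * t * (w \<bullet> x0) + t^2 * (w \<bullet> w)"
        using x0 unfolding power2_norm_eq_inner by (simp add: norm_eq_sqrt_inner inner_add_left inner_add_right inner_commute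
            algebra_simps power2_eq_square)
      moreover have "w \<bullet> (P *v x0) - \<mu> * (w \<bullet> x0) = w \<bullet> w"
        by (simp add: w_def inner_diff_right)
      ultimately show "0 \<le> 2 * t * (w \<bullet> w) + t^2 * (f w - \<mu> * (w \<bullet> w))"
        by (simp add: algebra_simps)
    qed
    from lin_nonneg_zero[OF this] have "w = 0" by simp
    thus ?thesis by (simp add: w_def)
  qed
  define S where "S = {c. \<exists>x::real^'n. x \<noteq> 0 \<and> P *v x = c *\<^sub>R x}"
  have muS: "\<mu> \<in> S" unfolding S_def using eig x0nz by auto
  have lowS: "\<mu> \<le> c" if cS: "c \<in> S" for c
  proof -
    obtain x where x: "x \<noteq> 0" "P *v x = c *\<^sub>R x" using cS unfolding S_def by auto
    have "\<mu> * (norm x)^2 \<le> f x" by (rule lb)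
    also have "f x = c * (norm x)^2" by (simp add: f_def x power2_norm_eq_inner)
    finally show ?thesis using x by simp
  qed
  have fin: "finite S"
  proof (rule ccontr)
    assume "infinite S"
    then obtain T where T: "finite T" "card T = CARD('n) + 1" "T \<subseteq> S"
      using infinite_arbitrarily_large by blast
    have "\<forall>c\<in>T. \<exists>x::real^'n. x \<noteq> 0 \<and> P *v x = c *\<^sub>R x" using T(3) S_def by auto
    then obtain e where e: "\<And>c. c \<in> T \<Longrightarrow> e c \<noteq> 0 \<and> P *v e c = c *\<^sub>R e c" by metis
    have orth: "e c \<bullet> e d = 0" if "c \<in> T" "d \<in> T" "c \<noteq> d" for c d
    proof -
      have "c * (e c \<bullet> e d) = (P *v e c) \<bullet> e d" using e[OF that(1)] by simp
      also have "\<dots> = e c \<bullet> (P *v e d)" using sym_inner[OF sym] by simp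
      also have "\<dots> = d * (e c \<bullet> e d)" using e[OF that(2)] by simp
      finally show ?thesis using that(3) by simp
    qed
    have inj: "inj_on e T"
    proof (rule inj_onI)
      fix c d assume "c \<in> T" "d \<in> T" "e c = e d"
      show "c = d"
      proof (rule ccontr)
        assume "c \<noteq> d"
        hence "e c \<bullet> e c = 0" using orth \<open>c\<in>T\<close> \<open>d\<in>T\<close> \<open>e c = e d\<close> by metis
        thus False using e \<open>c \<in> T\<close> by simp
      qed
    qed
    have "pairwise orthogonal (e ` T)"
      unfolding pairwise_def orthogonal_def using orth by auto
    moreover have "0 \<notin> e ` T" using e by auto
    ultimately have "independent (e ` T)" by (rule pairwise_orthogonal_independent)
    from independent_bound[OF this] have "card (e ` T) \<le> CARD('n)" by simp
    moreover have "card (e ` T) = card T" using card_image[OF inj] .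
    ultimately show False using T(2) by simp
  qed
  have "lambda_min P = \<mu>" unfolding lambda_min_def S_def[symmetric]
    by (rule Min_eqI[OF fin lowS muS])
  thus ?thesis using mupos lb f_def by simp
qed



lemma vappend_norm2: "(norm (vappend x y))^2 = (norm x)^2 + (norm y)^2"
proof -
  have "(norm (vappend x y))^2 = (\<Sum>i\<in>UNIV. (vappend x y $ i)^2)"
    by (simp only: power2_norm_eq_inner inner_vec_def inner_real_def) (simp add: power2_eq_square)
  also have "\<dots> = (\<Sum>i\<in>UNIV <+> UNIV. (vappend x y $ i)^2)"
    by (simp only: UNIV_Plus_UNIV)
  also have "\<dots> = (\<Sum>i\<in>UNIV. (x $ i)^2) + (\<Sum>i\<in>UNIV. (y $ i)^2)"
    by (subst sum.Plus) (auto simp: vappend_def o_def)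
  also have "\<dots> = (norm x)^2 + (norm y)^2"
    by (simp only: power2_norm_eq_inner inner_vec_def inner_real_def) (simp add: power2_eq_square)
  finally show ?thesis .
qed

lemma vappend_norm_ge1: "norm x \<le> norm (vappend x y)"
  using vappend_norm2[of x y] by (metis le_add_same_cancel1 norm_ge_zero power2_le_imp_le zero_le_power2)

lemma vappend_norm_ge2: "norm y \<le> norm (vappend x y)"
  using vappend_norm2[of x y] by (metis le_add_same_cancel2 norm_ge_zero power2_le_imp_le zero_le_power2)

lemma vappend_eq_0: "vappend x y = 0 \<longleftrightarrow> x = 0 \<and> y = 0"
proof -
  have "vappend x y = 0 \<longleftrightarrow> (norm (vappend x y))^2 = 0" by simp
  also have "\<dots> \<longleftrightarrow> x = 0 \<and> y = 0" unfolding vappend_norm2 by (simp add: add_nonneg_eq_0_iff)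
  finally show ?thesis .
qed

lemma continuous_on_vappend[continuous_intros]:
  assumes "continuous_on S f" "continuous_on S g"
  shows "continuous_on S (\<lambda>z. vappend (f z) (g z))"
  unfolding vappend_def
proof (rule continuous_on_vec_lambda)
  fix i
  show "continuous_on S (\<lambda>z. case i of Inl a \<Rightarrow> f z $ a | Inr b \<Rightarrow> g z $ b)"
    by (cases i) (auto intro!: continuous_intros assms)
qed

lemma continuous_on_matvec[continuous_intros]:
  fixes A :: "real^'n^'m"
  assumes "continuous_on S f"
  shows "continuous_on S (\<lambda>z. A *v f z)"
  using bounded_linear.continuous_on[OF matrix_vector_mul_bounded_linear assms] .

lemma mat_norm_bound: "norm (M *v x) \<le> mat_norm M * norm (x::real^'n)"
  for M :: "real^'n^'m"
  unfolding mat_norm_def by (rule onorm[OF matrix_vector_mul_bounded_linear])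

lemma mat_norm_nonneg: "0 \<le> mat_norm (M :: real^'n^'m)"
  unfolding mat_norm_def by (rule onorm_pos_le[OF matrix_vector_mul_bounded_linear])

lemma limit_le:
  fixes F :: "'a::real_normed_vector \<Rightarrow> real"
  assumes "continuous_on UNIV F" "\<And>e. e > 0 \<Longrightarrow> F (z + e *\<^sub>R w) < 0"
  shows "F z \<le> 0"
proof -
  define h where "h = (\<lambda>e::real. F (z + e *\<^sub>R w))"
  have "continuous_on UNIV h" unfolding h_def
    by (intro continuous_on_compose2[OF assms(1)] continuous_intros) auto
  hence "isCont h 0" by (simp add: continuous_on_eq_continuous_at)
  hence "(h \<longlongrightarrow> h 0) (at_right 0)"
    by (simp add: isCont_def filterlim_at_split)
  moreover have "\<forall>\<^sub>F e in at_right 0. h e \<le> 0"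
    using assms(2) h_def
    by (auto intro!: eventually_at_rightI[of 0 1] less_imp_le)
  ultimately have "h 0 \<le> 0"
    by (rule tendsto_upperbound) (simp add: trivial_limit_at_right_real)
  thus ?thesis by (simp add: h_def)
qed

lemma quad_scale: "(s *\<^sub>R y) \<bullet> (P *v (s *\<^sub>R y)) = s^2 * (y \<bullet> (P *v y))"
  for y :: "real^'n"
  by (simp add: matrix_vector_mult_scaleR power2_eq_square)

lemma quad_nonneg: "sym_posdef P \<Longrightarrow> 0 \<le> y \<bullet> (P *v y)"
  unfolding sym_posdef_def by (cases "y = 0") (auto intro: less_imp_le)

lemma in_scaled_sublevel:
  fixes P :: "real^'n^'n"
  assumes pd: "sym_posdef P" and c: "c > 0" and M: "0 \<le> M" "M < c"
    and y: "y \<bullet> (P *v y) \<le> M"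
  shows "y \<in> (\<lambda>x. sqrt (M / c) *\<^sub>R x) ` {x. x \<bullet> (P *v x) \<le> c}"
proof (cases "M = 0")
  case True
  hence "y = 0" using y pd unfolding sym_posdef_def by (metis not_le)
  thus ?thesis using True c by (auto intro!: image_eqI[of _ _ 0])
next
  case False
  define l where "l = sqrt (M / c)"
  have lpos: "l > 0" using False M c by (simp add: l_def)
  have l2: "l^2 = M / c" using M c by (simp add: l_def)
  define x where "x = (1/l) *\<^sub>R y"
  have "y = l *\<^sub>R x" using lpos by (simp add: x_def)
  moreover have "x \<bullet> (P *v x) \<le> c"
  proof -
    have "x \<bullet> (P *v x) = (y \<bullet> (P *v y)) / l^2" unfolding x_def quad_scale
      by (simp add: power_divide)
    also have "\<dots> \<le> M / l^2" using y lpos by (simp add: divide_right_mono)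
    also have "\<dots> = c" using l2 False c M by simp
    finally show ?thesis .
  qed
  ultimately show ?thesis by (auto simp: l_def)
qed



theorem proposition4:
  fixes A1 :: "real^'n1^'n1" and B1 :: "real^'m^'n1"
    and A2 :: "real^'n2^'n2" and B2 :: "real^'p^'n2"
    and C :: "real^'n2^'m"
    and Af :: "real^'n2^'n2" and Bf :: "real^'m^'n2"
    and U :: "(real^'p) set"
    and K1 :: "real^('n1 + 'n2)^'m" and K21 :: "real^'m^'p" and K22 :: "real^'n2^'p"
    and Q :: "real^('n1 + 'n2)^('n1 + 'n2)" and P :: "real^'n2^'n2"
    and \<alpha>1 \<alpha>2 \<gamma>1 \<gamma>21 \<gamma>22 :: real
  assumes A1: "stabilizable A1 B1"
    and A2: "controllable A2 B2"
    and A3: "block_ccf A2 B2"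
    and A4: "schur_stable Af"
    and A5: "\<forall>z. invariant_zero Af Bf C z \<longrightarrow> \<not> unstable_pole A1 z"
    and A8: "0 \<in> interior U"
    and gain1: "schur_stable (A1aug A1 B1 C Af - B1aug B1 ** K1)"
    and gain2: "schur_stable (A2 - B2 ** K22)"
    and Qpd: "sym_posdef Q" and Ppd: "sym_posdef P"
    and pos: "\<alpha>1 > 0" "\<alpha>2 > 0" "\<gamma>1 > 0" "\<gamma>21 > 0" "\<gamma>22 \<ge> 0"
    and lyap: "\<And>(x1::real^'n1) (x2::real^'n2) (xf::real^'n2).
      let xa = vappend x1 xf; xt = x2 - xf;
          vd = - (K1 *v xa); u = K21 *v vd - K22 *v x2;
          x1' = A1 *v x1 + B1 *v (C *v x2); x2' = A2 *v x2 + B2 *v u;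
          xf' = Af *v xf + Bf *v vd;
          xa' = vappend x1' xf'; xt' = x2' - xf'
      in (xa \<noteq> 0 \<longrightarrow>
            xa' \<bullet> (Q *v xa') - xa \<bullet> (Q *v xa)
              < - \<alpha>1 * (xa \<bullet> (Q *v xa)) + \<gamma>1 * (norm (C *v xt))\<^sup>2) \<and>
         (xt \<noteq> 0 \<longrightarrow>
            xt' \<bullet> (P *v xt') - xt \<bullet> (P *v xt)
              < - \<alpha>2 * (xt \<bullet> (P *v xt)) + \<gamma>21 * (norm vd)\<^sup>2 + \<gamma>22 * (norm xf)\<^sup>2)"
    and smallgain: "\<alpha>1 * \<alpha>2 * lambda_min P * lambda_min Q
                     \<ge> \<gamma>1 * (mat_norm C)\<^sup>2 * (\<gamma>21 * (mat_norm K1)\<^sup>2 + \<gamma>22)"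
  shows "\<exists>(G1 :: (real^('n1 + 'n2)) set) (G2 :: (real^'n2) set) lam1 lam2.
           0 \<in> interior G1 \<and> 0 \<in> interior G2 \<and>
           0 \<le> lam1 \<and> lam1 < 1 \<and> 0 \<le> lam2 \<and> lam2 < 1 \<and>
           (\<forall>(x1::real^'n1) (x2::real^'n2) (xf::real^'n2).
              vappend x1 xf \<in> G1 \<and> x2 - xf \<in> G2 \<longrightarrow>
              (let xa = vappend x1 xf;
                   vd = - (K1 *v xa); u = K21 *v vd - K22 *v x2;
                   x1' = A1 *v x1 + B1 *v (C *v x2); x2' = A2 *v x2 + B2 *v u;
                   xf' = Af *v xf + Bf *v vd
               in u \<in> U \<and> vappend x1' xf' \<in> (\<lambda>x. lam1 *\<^sub>R x) ` G1 \<and>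
                  x2' - xf' \<in> (\<lambda>x. lam2 *\<^sub>R x) ` G2))"
proof -
  define V1 where "V1 = (\<lambda>y. y \<bullet> (Q *v y))"
  define V2 where "V2 = (\<lambda>y. y \<bullet> (P *v y))"
  define XA where "XA = (\<lambda>z::(real^'n1) \<times> (real^'n2) \<times> (real^'n2). vappend (fst z) (snd (snd z)))"
  define XT where "XT = (\<lambda>z::(real^'n1) \<times> (real^'n2) \<times> (real^'n2). fst (snd z) - snd (snd z))"
  define VD where "VD = (\<lambda>z. - (K1 *v XA z))"
  define UU where "UU = (\<lambda>z. K21 *v VD z - K22 *v fst (snd z))"
  define XF' where "XF' = (\<lambda>z. Af *v snd (snd z) + Bf *v VD z)"
  define XA' where "XA' = (\<lambda>z. vappend (A1 *v fst z + B1 *v (C *v fst (snd z))) (XF' z))"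
  define XT' where "XT' = (\<lambda>z. (A2 *v fst (snd z) + B2 *v UU z) - XF' z)"
  have L1: "V1 (XA' z) - V1 (XA z) < - \<alpha>1 * V1 (XA z) + \<gamma>1 * (norm (C *v XT z))^2"
    if "XA z \<noteq> 0" for z
  proof -
    obtain x1 x2 xf where z: "z = (x1,x2,xf)" by (cases z) auto
    show ?thesis using lyap[of x1 xf x2] that
      unfolding Let_def z V1_def XA_def XT_def XA'_def XF'_def VD_def by simp
  qed
  have L2: "V2 (XT' z) - V2 (XT z) < - \<alpha>2 * V2 (XT z) + \<gamma>21 * (norm (VD z))^2
              + \<gamma>22 * (norm (snd (snd z)))^2"
    if "XT z \<noteq> 0" for z
  proof -
    obtain x1 x2 xf where z: "z = (x1,x2,xf)" by (cases z) auto
    show ?thesis using lyap[of x1 xf x2] that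
      unfolding Let_def z V2_def XA_def XT_def XT'_def XF'_def VD_def UU_def by simp
  qed
  define a where "a = lambda_min P"
  define b where "b = lambda_min Q"
  have apos: "a > 0" and alb: "\<And>x. a * (norm x)^2 \<le> V2 x"
    using lambda_min_props[OF Ppd] unfolding a_def V2_def by auto
  have bpos: "b > 0" and blb: "\<And>x. b * (norm x)^2 \<le> V1 x"
    using lambda_min_props[OF Qpd] unfolding b_def V1_def by auto
  have V1nn: "\<And>x. 0 \<le> V1 x" unfolding V1_def using quad_nonneg[OF Qpd] .
  have V2nn: "\<And>x. 0 \<le> V2 x" unfolding V2_def using quad_nonneg[OF Ppd] .
  have V10: "V1 0 = 0" and V20: "V2 0 = 0" by (simp_all add: V1_def V2_def)
  define k1 where "k1 = \<gamma>1 * (mat_norm C)^2"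
  define k2 where "k2 = \<gamma>21 * (mat_norm K1)^2 + \<gamma>22"
  have k1nn: "k1 \<ge> 0" and k2nn: "k2 \<ge> 0" using pos by (simp_all add: k1_def k2_def)
  have sg: "k1 * k2 \<le> \<alpha>1 * \<alpha>2 * a * b"
    using smallgain by (simp add: k1_def k2_def a_def b_def mult.assoc)
  have BXT: "\<gamma>1 * (norm (C *v XT z))^2 * a \<le> k1 * V2 (XT z)" for z
  proof -
    have "norm (C *v XT z) \<le> mat_norm C * norm (XT z)" by (rule mat_norm_bound)
    hence "(norm (C *v XT z))^2 \<le> (mat_norm C)^2 * (norm (XT z))^2"
      by (metis norm_ge_zero power_mono power_mult_distrib)
    hence "\<gamma>1 * (norm (C *v XT z))^2 * a \<le> \<gamma>1 * (mat_norm C)^2 * (a * (norm (XT z))^2)"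
      using pos apos by (simp add: mult_left_mono mult_right_mono algebra_simps)
    also have "\<dots> \<le> k1 * V2 (XT z)" unfolding k1_def[symmetric]
      by (rule mult_left_mono[OF alb k1nn])
    finally show ?thesis .
  qed
  have BXA: "(\<gamma>21 * (norm (VD z))^2 + \<gamma>22 * (norm (snd (snd z)))^2) * b \<le> k2 * V1 (XA z)" for z
  proof -
    have "norm (VD z) \<le> mat_norm K1 * norm (XA z)" unfolding VD_def
      using mat_norm_bound by (metis norm_minus_cancel)
    hence 1: "(norm (VD z))^2 \<le> (mat_norm K1)^2 * (norm (XA z))^2"
      by (metis norm_ge_zero power_mono power_mult_distrib)
    have 2: "(norm (snd (snd z)))^2 \<le> (norm (XA z))^2" unfolding XA_def
      by (simp add: vappend_norm2)
    have k2b: "\<gamma>21 * (norm (VD z))^2 + \<gamma>22 * (norm (snd (snd z)))^2 \<le> k2 * (norm (XA z))^2"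
      unfolding k2_def using mult_left_mono[OF 1 less_imp_le[OF pos(4)]] mult_left_mono[OF 2 pos(5)]
      by (simp add: algebra_simps)
    have "(\<gamma>21 * (norm (VD z))^2 + \<gamma>22 * (norm (snd (snd z)))^2) * b \<le> k2 * (b * (norm (XA z))^2)"
      using mult_right_mono[OF k2b less_imp_le[OF bpos]] by (simp add: algebra_simps)
    also have "\<dots> \<le> k2 * V1 (XA z)" by (rule mult_left_mono[OF blb k2nn])
    finally show ?thesis .
  qed
  obtain v1 :: "real^'n1" where v1: "v1 \<noteq> 0" using norm_axis_1 by (metis norm_zero zero_neq_one)
  obtain v2 :: "real^'n2" where v2: "v2 \<noteq> 0" using norm_axis_1 by (metis norm_zero zero_neq_one)
  have a1: "\<alpha>1 < 1"
  proof -
    define z where "z = (v1, 0::real^'n2, 0::real^'n2)"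
    have nz: "XA z \<noteq> 0" and t0: "XT z = 0" using v1 by (simp_all add: z_def XA_def XT_def vappend_eq_0)
    have p: "0 < V1 (XA z)" using Qpd nz unfolding sym_posdef_def V1_def by auto
    have "V1 (XA' z) - V1 (XA z) < - \<alpha>1 * V1 (XA z)" using L1[OF nz] t0 by simp
    hence "0 < (1 - \<alpha>1) * V1 (XA z)" using V1nn[of "XA' z"] by (simp add: algebra_simps)
    thus ?thesis using p by (simp add: zero_less_mult_iff)
  qed
  have a2: "\<alpha>2 < 1"
  proof -
    define z where "z = (0::real^'n1, v2, 0::real^'n2)"
    have nz: "XT z \<noteq> 0" and t0: "XA z = 0" using v2 by (simp_all add: z_def XA_def XT_def vappend_eq_0)
    have p: "0 < V2 (XT z)" using Ppd nz unfolding sym_posdef_def V2_def by auto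
    have "V2 (XT' z) - V2 (XT z) < - \<alpha>2 * V2 (XT z)" using L2[OF nz] t0
      by (simp add: VD_def z_def)
    hence "0 < (1 - \<alpha>2) * V2 (XT z)" using V2nn[of "XT' z"] by (simp add: algebra_simps)
    thus ?thesis using p by (simp add: zero_less_mult_iff)
  qed
  have cont1: "continuous_on UNIV (\<lambda>z. V1 (XA' z) - V1 (XA z) + \<alpha>1 * V1 (XA z) - \<gamma>1 * (norm (C *v XT z))^2)"
    unfolding V1_def XA'_def XA_def XT_def XF'_def VD_def by (intro continuous_intros)
  have cont2: "continuous_on UNIV (\<lambda>z. V2 (XT' z) - V2 (XT z) + \<alpha>2 * V2 (XT z) - \<gamma>21 * (norm (VD z))^2
              - \<gamma>22 * (norm (snd (snd z)))^2)"
    unfolding V2_def XT'_def XA_def XT_def XF'_def VD_def UU_def by (intro continuous_intros)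
  have N1: "V1 (XA' z) \<le> \<gamma>1 * (norm (C *v XT z))^2" if z0: "XA z = 0" for z
  proof -
    have "V1 (XA' z) - V1 (XA z) + \<alpha>1 * V1 (XA z) - \<gamma>1 * (norm (C *v XT z))^2 \<le> 0"
    proof (rule limit_le[OF cont1, where w = "(v1, 0, 0)"])
      fix e :: real assume e: "e > 0"
      have "XA (z + e *\<^sub>R (v1, 0, 0)) \<noteq> 0"
        using z0 e v1 by (simp add: XA_def vappend_eq_0)
      from L1[OF this] show "V1 (XA' (z + e *\<^sub>R (v1, 0, 0))) - V1 (XA (z + e *\<^sub>R (v1, 0, 0)))
          + \<alpha>1 * V1 (XA (z + e *\<^sub>R (v1, 0, 0))) - \<gamma>1 * (norm (C *v XT (z + e *\<^sub>R (v1, 0, 0))))^2 < 0"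
        by simp
    qed
    thus ?thesis using z0 V10 by simp
  qed
  have N2: "V2 (XT' z) \<le> \<gamma>21 * (norm (VD z))^2 + \<gamma>22 * (norm (snd (snd z)))^2" if z0: "XT z = 0" for z
  proof -
    have "V2 (XT' z) - V2 (XT z) + \<alpha>2 * V2 (XT z) - \<gamma>21 * (norm (VD z))^2
              - \<gamma>22 * (norm (snd (snd z)))^2 \<le> 0"
    proof (rule limit_le[OF cont2, where w = "(0, v2, 0)"])
      fix e :: real assume e: "e > 0"
      have "XT (z + e *\<^sub>R (0, v2, 0)) \<noteq> 0"
        using z0 e v2 by (simp add: XT_def algebra_simps)
      from L2[OF this] show "V2 (XT' (z + e *\<^sub>R (0, v2, 0))) - V2 (XT (z + e *\<^sub>R (0, v2, 0)))
          + \<alpha>2 * V2 (XT (z + e *\<^sub>R (0, v2, 0))) - \<gamma>21 * (norm (VD (z + e *\<^sub>R (0, v2, 0))))^2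
              - \<gamma>22 * (norm (snd (snd (z + e *\<^sub>R (0, v2, 0)))))^2 < 0"
        by simp
    qed
    thus ?thesis using z0 V20 by simp
  qed
  define \<rho> where "\<rho> = (if k1 = 0 then k2 / (b * \<alpha>2) + 1 else \<alpha>1 * a / k1)"
  have rpos: "\<rho> > 0"
  proof -
    have h: "k2 / (b * \<alpha>2) \<ge> 0" using k2nn bpos pos by simp
    show ?thesis
    proof (cases "k1 = 0")
      case True thus ?thesis using h by (simp add: \<rho>_def)
    next
      case False thus ?thesis using k1nn apos pos by (simp add: \<rho>_def)
    qed
  qed
  have c1: "k1 * \<rho> \<le> \<alpha>1 * a" using pos apos by (auto simp: \<rho>_def)
  have c2: "k2 \<le> \<alpha>2 * b * \<rho>"
  proof (cases "k1 = 0")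
    case True thus ?thesis using pos bpos by (simp add: \<rho>_def field_simps)
  next
    case False
    hence k1p: "k1 > 0" using k1nn by simp
    have "k2 * k1 \<le> \<alpha>2 * b * (\<alpha>1 * a)" using sg by (simp add: algebra_simps)
    thus ?thesis using False k1p by (simp add: \<rho>_def field_simps)
  qed
  obtain r where rp: "r > 0" and rU: "ball 0 r \<subseteq> U" using A8 mem_interior by blast
  define Lc1 where "Lc1 = mat_norm K21 * mat_norm K1 + mat_norm K22"
  define Lc2 where "Lc2 = mat_norm K22"
  have Lnn: "Lc1 \<ge> 0" "Lc2 \<ge> 0" by (simp_all add: Lc1_def Lc2_def mat_norm_nonneg)
  have UUb: "norm (UU z) \<le> Lc1 * norm (XA z) + Lc2 * norm (XT z)" for z
  proof -
    have x2: "fst (snd z) = XT z + snd (snd z)" by (simp add: XT_def)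
    have xf: "norm (snd (snd z)) \<le> norm (XA z)" by (simp add: XA_def vappend_norm_ge2)
    have "norm (UU z) \<le> norm (K21 *v VD z) + norm (K22 *v fst (snd z))"
      unfolding UU_def by (rule norm_triangle_ineq4)
    also have "\<dots> \<le> mat_norm K21 * norm (VD z) + mat_norm K22 * norm (fst (snd z))"
      by (intro add_mono mat_norm_bound)
    also have "\<dots> \<le> mat_norm K21 * (mat_norm K1 * norm (XA z)) + mat_norm K22 * (norm (XT z) + norm (XA z))"
    proof (intro add_mono mult_left_mono mat_norm_nonneg)
      show "norm (VD z) \<le> mat_norm K1 * norm (XA z)"
        unfolding VD_def using mat_norm_bound by (metis norm_minus_cancel)
      show "norm (fst (snd z)) \<le> norm (XT z) + norm (XA z)"
        unfolding x2 using norm_triangle_ineq[of "XT z" "snd (snd z)"] xf by linarith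
    qed
    also have "\<dots> = Lc1 * norm (XA z) + Lc2 * norm (XT z)"
      by (simp add: Lc1_def Lc2_def algebra_simps)
    finally show ?thesis .
  qed
  define D where "D = 2 * Lc1^2 / b + 2 * Lc2^2 * \<rho> / a"
  have Dnn: "D \<ge> 0" using bpos apos rpos by (simp add: D_def)
  define t where "t = r^2 / (D + 1)"
  have tpos: "t > 0" using rp Dnn by (simp add: t_def)
  have tD: "t * D < r^2" using rp Dnn by (simp add: t_def field_simps)
  define cc1 where "cc1 = t"
  define cc2 where "cc2 = t * \<rho>"
  have cc1p: "cc1 > 0" and cc2p: "cc2 > 0" using tpos rpos by (simp_all add: cc1_def cc2_def)
  define S where "S = {z. V1 (XA z) \<le> cc1 \<and> V2 (XT z) \<le> cc2}"
  have XAb: "(norm (XA z))^2 \<le> cc1 / b" if "z \<in> S" for z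
    using blb[of "XA z"] that bpos by (simp add: S_def field_simps)
  have XTb: "(norm (XT z))^2 \<le> cc2 / a" if "z \<in> S" for z
    using alb[of "XT z"] that apos by (simp add: S_def field_simps)
  have sq2: "(p + q)^2 \<le> 2 * p^2 + 2 * q^2" for p q :: real
  proof -
    have "0 \<le> (p - q)^2" by simp
    thus ?thesis by (simp add: power2_eq_square algebra_simps)
  qed
  have UUS: "UU z \<in> U" if zS: "z \<in> S" for z
  proof -
    have "(norm (UU z))^2 \<le> (Lc1 * norm (XA z) + Lc2 * norm (XT z))^2"
      using power_mono[OF UUb[of z] norm_ge_zero] .
    also have "\<dots> \<le> 2 * Lc1^2 * (norm (XA z))^2 + 2 * Lc2^2 * (norm (XT z))^2"
      using sq2[of "Lc1 * norm (XA z)" "Lc2 * norm (XT z)"] by (simp add: power_mult_distrib)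
    also have "\<dots> \<le> 2 * Lc1^2 * (cc1 / b) + 2 * Lc2^2 * (cc2 / a)"
      by (intro add_mono mult_left_mono XAb XTb zS) simp_all
    also have "\<dots> = t * D" by (simp add: D_def cc1_def cc2_def field_simps)
    finally have "(norm (UU z))^2 < r^2" using tD by linarith
    hence "norm (UU z) < r" using rp by (simp add: power2_less_imp_less)
    thus ?thesis using rU by auto
  qed
  have contA: "continuous_on UNIV (\<lambda>z. V1 (XA z))" unfolding V1_def XA_def by (intro continuous_intros)
  have contT: "continuous_on UNIV (\<lambda>z. V2 (XT z))" unfolding V2_def XT_def by (intro continuous_intros)
  have contA': "continuous_on UNIV (\<lambda>z. V1 (XA' z))"
    unfolding V1_def XA'_def XF'_def VD_def XA_def by (intro continuous_intros)
  have contT': "continuous_on UNIV (\<lambda>z. V2 (XT' z))"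
    unfolding V2_def XT'_def XF'_def VD_def XA_def UU_def by (intro continuous_intros)
  have closedS: "closed S"
  proof -
    have "S = {z. V1 (XA z) \<le> cc1} \<inter> {z. V2 (XT z) \<le> cc2}" by (auto simp: S_def)
    thus ?thesis using closed_Collect_le[OF contA continuous_on_const]
        closed_Collect_le[OF contT continuous_on_const] by (simp add: closed_Int)
  qed
  have boundedS: "bounded S"
    unfolding bounded_iff
  proof (intro exI ballI)
    fix z assume zS: "z \<in> S"
    have hA: "norm (XA z) \<le> sqrt (cc1 / b)" by (rule real_le_rsqrt[OF XAb[OF zS]])
    have hT: "norm (XT z) \<le> sqrt (cc2 / a)" by (rule real_le_rsqrt[OF XTb[OF zS]])
    have n1: "norm (fst z) \<le> norm (XA z)" by (simp add: XA_def vappend_norm_ge1)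
    have n3: "norm (snd (snd z)) \<le> norm (XA z)" by (simp add: XA_def vappend_norm_ge2)
    have n2: "norm (fst (snd z)) \<le> norm (XT z) + norm (XA z)"
    proof -
      have eq: "fst (snd z) = XT z + snd (snd z)" by (simp add: XT_def)
      show ?thesis unfolding eq using norm_triangle_ineq[of "XT z" "snd (snd z)"] n3 by linarith
    qed
    have "norm z \<le> norm (fst z) + norm (snd z)"
      using norm_Pair_le[of "fst z" "snd z"] by simp
    also have "norm (snd z) \<le> norm (fst (snd z)) + norm (snd (snd z))"
      using norm_Pair_le[of "fst (snd z)" "snd (snd z)"] by simp
    finally show "norm z \<le> 3 * sqrt (cc1 / b) + sqrt (cc2 / a)"
      using n1 n2 n3 hA hT by linarith
  qed
  have compS: "compact S" using closedS boundedS by (simp add: compact_eq_bounded_closed)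
  have neS: "S \<noteq> {}"
  proof -
    have "(0, 0, 0) \<in> S" using cc1p cc2p V10 V20
      by (simp add: S_def XA_def XT_def vappend_eq_0[THEN iffD2])
    thus ?thesis by auto
  qed
  have G1: "\<gamma>1 * (norm (C *v XT z))^2 \<le> \<alpha>1 * cc1" if zS: "z \<in> S" for z
  proof -
    have "\<gamma>1 * (norm (C *v XT z))^2 * a \<le> k1 * V2 (XT z)" by (rule BXT)
    also have "\<dots> \<le> k1 * cc2" using zS k1nn by (simp add: S_def mult_left_mono)
    also have "\<dots> = (k1 * \<rho>) * t" by (simp add: cc2_def)
    also have "\<dots> \<le> (\<alpha>1 * a) * t" using c1 tpos by (simp add: mult_right_mono)
    also have "\<dots> = (\<alpha>1 * cc1) * a" by (simp add: cc1_def)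
    finally show ?thesis using apos by (simp add: mult_le_cancel_right)
  qed
  have G2: "\<gamma>21 * (norm (VD z))^2 + \<gamma>22 * (norm (snd (snd z)))^2 \<le> \<alpha>2 * cc2" if zS: "z \<in> S" for z
  proof -
    have "(\<gamma>21 * (norm (VD z))^2 + \<gamma>22 * (norm (snd (snd z)))^2) * b \<le> k2 * V1 (XA z)" by (rule BXA)
    also have "\<dots> \<le> k2 * cc1" using zS k2nn by (simp add: S_def mult_left_mono)
    also have "\<dots> = k2 * t" by (simp add: cc1_def)
    also have "\<dots> \<le> (\<alpha>2 * b * \<rho>) * t" using c2 tpos by (simp add: mult_right_mono)
    also have "\<dots> = (\<alpha>2 * cc2) * b" by (simp add: cc2_def)
    finally show ?thesis using bpos by (simp add: mult_le_cancel_right)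
  qed
  obtain zm1 where zm1: "zm1 \<in> S" "\<And>y. y \<in> S \<Longrightarrow> V1 (XA' y) \<le> V1 (XA' zm1)"
    using continuous_attains_sup[OF compS neS continuous_on_subset[OF contA' subset_UNIV]] by blast
  obtain zm2 where zm2: "zm2 \<in> S" "\<And>y. y \<in> S \<Longrightarrow> V2 (XT' y) \<le> V2 (XT' zm2)"
    using continuous_attains_sup[OF compS neS continuous_on_subset[OF contT' subset_UNIV]] by blast
  define M1 where "M1 = V1 (XA' zm1)"
  define M2 where "M2 = V2 (XT' zm2)"
  have M1nn: "0 \<le> M1" and M2nn: "0 \<le> M2" by (simp_all add: M1_def M2_def V1nn V2nn)
  have M1lt: "M1 < cc1"
  proof (cases "XA zm1 = 0")
    case True
    thus ?thesis using N1[OF True] G1[OF zm1(1)] a1 cc1p unfolding M1_def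
      by (smt (verit) mult_less_cancel_right2)
  next
    case False
    have "(1 - \<alpha>1) * V1 (XA zm1) \<le> (1 - \<alpha>1) * cc1"
      using zm1(1) a1 by (intro mult_left_mono) (auto simp: S_def)
    thus ?thesis using L1[OF False] G1[OF zm1(1)] unfolding M1_def by (simp add: algebra_simps)
  qed
  have M2lt: "M2 < cc2"
  proof (cases "XT zm2 = 0")
    case True
    thus ?thesis using N2[OF True] G2[OF zm2(1)] a2 cc2p unfolding M2_def
      by (smt (verit) mult_less_cancel_right2)
  next
    case False
    have "(1 - \<alpha>2) * V2 (XT zm2) \<le> (1 - \<alpha>2) * cc2"
      using zm2(1) a2 by (intro mult_left_mono) (auto simp: S_def)
    thus ?thesis using L2[OF False] G2[OF zm2(1)] unfolding M2_def by (simp add: algebra_simps)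
  qed
  have I1: "0 \<in> interior {y. V1 y \<le> cc1}"
  proof (rule interiorI[of "{y. V1 y < cc1}"])
    show "open {y. V1 y < cc1}" unfolding V1_def
      by (rule open_Collect_less) (intro continuous_intros)+
  qed (use V10 cc1p in auto)
  have I2: "0 \<in> interior {y. V2 y \<le> cc2}"
  proof (rule interiorI[of "{y. V2 y < cc2}"])
    show "open {y. V2 y < cc2}" unfolding V2_def
      by (rule open_Collect_less) (intro continuous_intros)+
  qed (use V20 cc2p in auto)
  have lam1: "0 \<le> sqrt (M1 / cc1)" "sqrt (M1 / cc1) < 1" using M1nn M1lt cc1p by auto
  have lam2: "0 \<le> sqrt (M2 / cc2)" "sqrt (M2 / cc2) < 1" using M2nn M2lt cc2p by auto
  have step: "UU z \<in> U \<and> XA' z \<in> (\<lambda>x. sqrt (M1 / cc1) *\<^sub>R x) ` {y. V1 y \<le> cc1} \<and>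
      XT' z \<in> (\<lambda>x. sqrt (M2 / cc2) *\<^sub>R x) ` {y. V2 y \<le> cc2}" if zS: "z \<in> S" for z
  proof (intro conjI)
    show "UU z \<in> U" by (rule UUS[OF zS])
    show "XA' z \<in> (\<lambda>x. sqrt (M1 / cc1) *\<^sub>R x) ` {y. V1 y \<le> cc1}"
      using in_scaled_sublevel[OF Qpd cc1p M1nn M1lt, of "XA' z"] zm1(2)[OF zS]
      unfolding M1_def V1_def by simp
    show "XT' z \<in> (\<lambda>x. sqrt (M2 / cc2) *\<^sub>R x) ` {y. V2 y \<le> cc2}"
      using in_scaled_sublevel[OF Ppd cc2p M2nn M2lt, of "XT' z"] zm2(2)[OF zS]
      unfolding M2_def V2_def by simp
  qed
  show ?thesis
  proof (intro exI conjI allI impI)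
    show "0 \<in> interior {y. V1 y \<le> cc1}" by (rule I1)
    show "0 \<in> interior {y. V2 y \<le> cc2}" by (rule I2)
    show "0 \<le> sqrt (M1 / cc1)" "sqrt (M1 / cc1) < 1" "0 \<le> sqrt (M2 / cc2)" "sqrt (M2 / cc2) < 1"
      using lam1 lam2 by auto
    fix x1 :: "real^'n1" and x2 xf :: "real^'n2"
    assume "vappend x1 xf \<in> {y. V1 y \<le> cc1} \<and> x2 - xf \<in> {y. V2 y \<le> cc2}"
    hence "(x1, x2, xf) \<in> S" by (simp add: S_def XA_def XT_def)
    from step[OF this] show "let xa = vappend x1 xf;
                   vd = - (K1 *v xa); u = K21 *v vd - K22 *v x2;
                   x1' = A1 *v x1 + B1 *v (C *v x2); x2' = A2 *v x2 + B2 *v u;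
                   xf' = Af *v xf + Bf *v vd
               in u \<in> U \<and> vappend x1' xf' \<in> (\<lambda>x. sqrt (M1 / cc1) *\<^sub>R x) ` {y. V1 y \<le> cc1} \<and>
                  x2' - xf' \<in> (\<lambda>x. sqrt (M2 / cc2) *\<^sub>R x) ` {y. V2 y \<le> cc2}"
      unfolding Let_def UU_def VD_def XA_def XA'_def XT'_def XF'_def by simp
  qed
qed

end
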